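(* For positive integers $n$ and $k$, $C_{-2n}^{(2k-1)}$ equals the number of integer sequences $a_1\le a_2\ge a_3\le a_4\ge\cdots\ge a_{2n-1}$ with $1\le a_i\le k$ for all $i$.
   Context: For $N\ge0$, $C_N^{(K)}$ is the number of lattice paths with steps $(1,1),(1,-1)$ from $(0,0)$ to $(N,0)$ never going below the $x$-axis nor above $y=K$. For odd $K$ the generating function $F(x)=\sum_{N\ge0}C_N^{(K)}x^N$ is a rational function $p/q$ with $\deg p<\deg q$, $q(0)\neq0$; values at negative indices are defined by extending the linear recurrence backwards, equivalently $\sum_{N\ge1}C_{-N}^{(K)}x^N=-F(1/x)$. *)

theory Defs
  imports "HOL-Computational_Algebra.Polynomial"
begin

text \<open>Lattice paths from (0,0) to (N,0) with steps (1,1),(1,-1), staying in 0..K,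
  encoded as their list of vertical steps.\<close>
definition bounded_dyck_paths :: "nat \<Rightarrow> nat \<Rightarrow> int list set" where
  "bounded_dyck_paths K N = {s. length s = N \<and> set s \<subseteq> {-1, 1} \<and> sum_list s = 0 \<and>
      (\<forall>i\<le>N. 0 \<le> sum_list (take i s) \<and> sum_list (take i s) \<le> int K)}"

definition C_nonneg :: "nat \<Rightarrow> nat \<Rightarrow> nat" where
  "C_nonneg K N = card (bounded_dyck_paths K N)"

definition satisfies_rec :: "rat poly \<Rightarrow> (int \<Rightarrow> rat) \<Rightarrow> bool" where
  "satisfies_rec q c \<longleftrightarrow> (\<forall>N::int. (\<Sum>j\<le>degree q. coeff q j * c (N - int j)) = 0)"

text \<open>The extension of C^(K) to all integers: the unique two-sided sequence agreeing
  with the path counts for N >= 0 and satisfying, for all integers, a linear recurrence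
  whose denominator polynomial q has q(0) \<noteq> 0 (equivalently F = p/q with deg p < deg q).\<close>
definition C_ext :: "nat \<Rightarrow> int \<Rightarrow> rat" where
  "C_ext K = (THE c. (\<forall>N::nat. c (int N) = of_nat (C_nonneg K N)) \<and>
                     (\<exists>q. coeff q 0 \<noteq> 0 \<and> satisfies_rec q c))"

definition alt_seqs :: "nat \<Rightarrow> nat \<Rightarrow> int list set" where
  "alt_seqs m k = {a. length a = m \<and> set a \<subseteq> {1..int k} \<and>
      (\<forall>i. i + 1 < m \<longrightarrow> (if even i then a ! i \<le> a ! (i+1) else a ! i \<ge> a ! (i+1)))}"

end

theory Submission
  imports Defs
begin


fun pp :: "nat \<Rightarrow> rat poly" where
  "pp 0 = 1"
| "pp (Suc 0) = [:0,1:]"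
| "pp (Suc (Suc t)) = pCons 0 (pp (Suc t)) - pp t"

lemma pp_deg_coeff: "degree (pp t) \<le> t \<and> coeff (pp t) t = 1"
proof (induction t rule: pp.induct)
  case 1 then show ?case by simp
next
  case 2 then show ?case by simp
next
  case (3 t)
  have c: "coeff (pp t) (Suc (Suc t)) = 0" using 3 by (intro coeff_eq_0) auto
  have "degree (pCons 0 (pp (Suc t))) \<le> Suc (Suc t)" using 3 by auto
  moreover have "degree (pp t) \<le> Suc (Suc t)" using 3 by auto
  ultimately have "degree (pp (Suc (Suc t))) \<le> Suc (Suc t)"
    by (simp add: degree_diff_le)
  then show ?case using 3 c by simp
qed

lemma pp_degree: "degree (pp t) = t"
  using pp_deg_coeff[of t] by (metis le_antisym le_degree zero_neq_one)

lemma pp_coeff_top: "coeff (pp t) t = 1"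
  using pp_deg_coeff by blast

lemma pp_coeff_high: "t < l \<Longrightarrow> coeff (pp t) l = 0"
  by (intro coeff_eq_0) (simp add: pp_degree)

lemma pp_coeff0: "coeff (pp (2*r)) 0 = (-1)^r"
proof (induction r)
  case 0 then show ?case by simp
next
  case (Suc r)
  have "2 * Suc r = Suc (Suc (2*r))" by simp
  then show ?case using Suc by simp
qed



lemma rec_backward_zero:
  assumes q0: "coeff q 0 \<noteq> 0" and sr: "satisfies_rec q e" and z: "\<And>N. N \<ge> N0 \<Longrightarrow> e N = 0"
  shows "e M = 0"
proof -
  have qnz: "q \<noteq> 0" using q0 by auto
  define D where "D = degree q"
  have lc: "coeff q D \<noteq> 0" using qnz unfolding D_def by simp
  have "\<forall>M. M \<ge> N0 - int t \<longrightarrow> e M = 0" for t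
  proof (induction t)
    case 0 then show ?case using z by simp
  next
    case (Suc t)
    show ?case
    proof (intro allI impI)
      fix M assume M: "N0 - int (Suc t) \<le> M"
      show "e M = 0"
      proof (cases "M \<ge> N0 - int t")
        case True then show ?thesis using Suc by blast
      next
        case False
        have r: "(\<Sum>j\<le>D. coeff q j * e (M + int D - int j)) = 0"
          using sr unfolding satisfies_rec_def D_def by (metis (no_types))
        have "(\<Sum>j\<le>D. coeff q j * e (M + int D - int j))
              = coeff q D * e M + (\<Sum>j<D. coeff q j * e (M + int D - int j))"
          by (simp add: lessThan_Suc_atMost[symmetric] del: lessThan_Suc_atMost)
        also have "(\<Sum>j<D. coeff q j * e (M + int D - int j)) = 0"
          using Suc False M by (intro sum.neutral) auto
        finally show ?thesis using r lc by simp
      qed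
    qed
  qed
  moreover have "M \<ge> N0 - int (nat (N0 - M))" by simp
  ultimately show ?thesis by blast
qed

lemma rec_shift:
  assumes "satisfies_rec q1 c"
  shows "satisfies_rec q1 (\<lambda>N. \<Sum>j\<le>degree q2. coeff q2 j * c (N - int j))"
  unfolding satisfies_rec_def
proof
  fix N :: int
  have "(\<Sum>i\<le>degree q1. coeff q1 i * (\<Sum>j\<le>degree q2. coeff q2 j * c (N - int i - int j)))
     = (\<Sum>j\<le>degree q2. coeff q2 j * (\<Sum>i\<le>degree q1. coeff q1 i * c (N - int j - int i)))"
    by (simp add: sum_distrib_left sum.swap[of _ "{..degree q1}"] algebra_simps)
  also have "\<dots> = 0" using assms unfolding satisfies_rec_def by simp
  finally show "(\<Sum>i\<le>degree q1. coeff q1 i * (\<Sum>j\<le>degree q2. coeff q2 j * c (N - int i - int j))) = 0" .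
qed

lemma rec_unique:
  assumes q1: "coeff q1 0 \<noteq> 0" "satisfies_rec q1 c1"
      and q2: "coeff q2 0 \<noteq> 0" "satisfies_rec q2 c2"
      and eq: "\<And>N::nat. c1 (int N) = c2 (int N)"
  shows "c2 = c1"
proof -
  define e where "e = (\<lambda>N. \<Sum>j\<le>degree q2. coeff q2 j * c1 (N - int j))"
  have se: "satisfies_rec q1 e" unfolding e_def by (rule rec_shift[OF q1(2)])
  have "e N = 0" if "N \<ge> int (degree q2)" for N
  proof -
    have "e N = (\<Sum>j\<le>degree q2. coeff q2 j * c2 (N - int j))"
      unfolding e_def
    proof (intro sum.cong refl)
      fix j assume "j \<in> {..degree q2}"
      then have "N - int j = int (nat (N - int j))" using that by auto
      then show "coeff q2 j * c1 (N - int j) = coeff q2 j * c2 (N - int j)" using eq by metis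
    qed
    also have "\<dots> = 0" using q2(2) unfolding satisfies_rec_def by simp
    finally show ?thesis .
  qed
  then have e0: "\<And>M. e M = 0" using rec_backward_zero[OF q1(1) se] by blast
  define d where "d = (\<lambda>N. c1 N - c2 N)"
  have sd: "satisfies_rec q2 d"
    unfolding satisfies_rec_def d_def
  proof
    fix N
    have "(\<Sum>j\<le>degree q2. coeff q2 j * (c1 (N - int j) - c2 (N - int j)))
      = e N - (\<Sum>j\<le>degree q2. coeff q2 j * c2 (N - int j))"
      unfolding e_def by (simp add: right_diff_distrib sum_subtractf)
    then show "(\<Sum>j\<le>degree q2. coeff q2 j * (c1 (N - int j) - c2 (N - int j))) = 0"
      using e0 q2(2) unfolding satisfies_rec_def by simp
  qed
  have "d N = 0" if "N \<ge> 0" for N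
    using eq[of "nat N"] that unfolding d_def by simp
  then have "\<And>M. d M = 0" using rec_backward_zero[OF q2(1) sd] by blast
  then show ?thesis unfolding d_def by auto
qed



lemma all_nat_split2: "(\<forall>i::nat. Q i) = (Q 0 \<and> Q (Suc 0) \<and> (\<forall>j. Q (Suc (Suc j))))"
  by (metis not0_implies_Suc)

lemma alt_finite: "finite (alt_seqs L k)"
proof (rule finite_subset)
  show "alt_seqs L k \<subseteq> {xs. set xs \<subseteq> {1..int k} \<and> length xs = L}"
    unfolding alt_seqs_def by auto
  show "finite {xs. set xs \<subseteq> {1..int k} \<and> length xs = L}"
    by (rule finite_lists_length_eq) simp
qed

lemma alt_Cons2:
  "(x#y#r \<in> alt_seqs (Suc (Suc L)) k) \<longleftrightarrow>
     x \<in> {1..int k} \<and> y \<in> {1..int k} \<and> x \<le> y \<and> (L > 0 \<longrightarrow> r!0 \<le> y) \<and> r \<in> alt_seqs L k"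
  unfolding alt_seqs_def
  apply (subst all_nat_split2)
  apply (auto simp: )
  done

lemma alt_one: "alt_seqs (Suc 0) k = (\<lambda>x. [x]) ` {1..int k}"
  unfolding alt_seqs_def
  apply (auto simp: length_Suc_conv)
  done



definition Qf :: "nat \<Rightarrow> nat \<Rightarrow> int \<Rightarrow> rat" where
  "Qf k n b = (if n = 0 then (if b \<ge> int k then 1 else 0)
              else of_nat (card {a \<in> alt_seqs (2*n-1) k. a!0 \<le> b}))"

lemma alt_len: "a \<in> alt_seqs L k \<Longrightarrow> length a = L"
  unfolding alt_seqs_def by auto

lemma alt_hd_range: "a \<in> alt_seqs (Suc L) k \<Longrightarrow> a!0 \<in> {1..int k}"
  unfolding alt_seqs_def by (auto simp: nth_mem subset_iff)

lemma alt_cons2_ex: "a \<in> alt_seqs (Suc (Suc L)) k \<Longrightarrow> \<exists>x y r. a = x#y#r"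
  using alt_len[of a] by (cases a; cases "tl a"; auto)

lemma Qf_Suc_0: "Qf k (Suc n) 0 = 0"
proof -
  have "{a \<in> alt_seqs (Suc (2*n)) k. a!0 \<le> 0} = {}"
    using alt_hd_range[of _ "2*n" k] by fastforce
  then show ?thesis unfolding Qf_def by (simp del: Collect_empty_eq)
qed

lemma Qf_step:
  assumes b: "1 \<le> b" "b \<le> int k"
  shows "Qf k (Suc n) b - Qf k (Suc n) (b-1) = (\<Sum>c\<in>{b..int k}. Qf k n c)"
proof -
  define L where "L = 2*n+1"
  have QS: "Qf k (Suc n) c = of_nat (card {a \<in> alt_seqs L k. a!0 \<le> c})" for c
    unfolding Qf_def L_def by simp
  define A where "A c = {a \<in> alt_seqs L k. a!0 \<le> c}" for c
  define Eb where "Eb = {a \<in> alt_seqs L k. a!0 = b}"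
  have fin: "finite (A c)" for c unfolding A_def using alt_finite by simp
  have AU: "A b = A (b-1) \<union> Eb" "A (b-1) \<inter> Eb = {}" unfolding A_def Eb_def by auto
  have cA: "card (A b) = card (A (b-1)) + card Eb"
    using AU fin by (metis card_Un_disjoint finite_Un)
  have cE: "of_nat (card Eb) = (\<Sum>c\<in>{b..int k}. Qf k n c)"
  proof (cases n)
    case 0
    then have "Eb = {[b]}" unfolding Eb_def L_def using alt_one[of k] b by auto
    moreover have "(\<Sum>c\<in>{b..int k}. Qf k 0 c) = 1"
    proof -
      have "(\<Sum>c\<in>{b..int k}. Qf k 0 c) = (\<Sum>c\<in>{int k}. Qf k 0 c)"
        by (rule sum.mono_neutral_right) (use b in \<open>auto simp: Qf_def\<close>)
      then show ?thesis by (simp add: Qf_def)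
    qed
    ultimately show ?thesis using 0 by simp
  next
    case (Suc n')
    define L' where "L' = 2*n'+1"
    have LL: "L = Suc (Suc L')" unfolding L_def L'_def Suc by simp
    have QS': "Qf k n c = of_nat (card {r \<in> alt_seqs L' k. r!0 \<le> c})" for c
      unfolding Qf_def L'_def Suc by simp
    define F where "F c = (\<lambda>r. b#c#r) ` {r \<in> alt_seqs L' k. r!0 \<le> c}" for c
    have EU: "Eb = (\<Union>c\<in>{b..int k}. F c)"
    proof
      show "Eb \<subseteq> (\<Union>c\<in>{b..int k}. F c)"
      proof
        fix a assume a: "a \<in> Eb"
        then have "a \<in> alt_seqs (Suc (Suc L')) k" unfolding Eb_def LL by simp
        then obtain x y r where xyr: "a = x#y#r" using alt_cons2_ex by blast
        have "x#y#r \<in> alt_seqs (Suc (Suc L')) k" using a xyr unfolding Eb_def LL by auto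
        then have "x \<in> {1..int k} \<and> y \<in> {1..int k} \<and> x \<le> y \<and> r!0 \<le> y \<and> r \<in> alt_seqs L' k"
          unfolding alt_Cons2 L'_def by simp
        moreover have "x = b" using a xyr unfolding Eb_def by simp
        ultimately have "y \<in> {b..int k}" "r \<in> {r \<in> alt_seqs L' k. r!0 \<le> y}" "a = b#y#r"
          using xyr by auto
        then show "a \<in> (\<Union>c\<in>{b..int k}. F c)" unfolding F_def by blast
      qed
      show "(\<Union>c\<in>{b..int k}. F c) \<subseteq> Eb"
        unfolding F_def Eb_def LL using b by (auto simp: alt_Cons2 L'_def)
    qed
    have "card Eb = (\<Sum>c\<in>{b..int k}. card (F c))"
      unfolding EU
    proof (rule card_UN_disjoint)
      show "finite {b..int k}" by simp
      show "\<forall>c\<in>{b..int k}. finite (F c)" unfolding F_def using alt_finite by simp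
      show "\<forall>c\<in>{b..int k}. \<forall>c'\<in>{b..int k}. c \<noteq> c' \<longrightarrow> F c \<inter> F c' = {}"
        unfolding F_def by auto
    qed
    also have "\<dots> = (\<Sum>c\<in>{b..int k}. card {r \<in> alt_seqs L' k. r!0 \<le> c})"
      unfolding F_def by (intro sum.cong refl card_image) (auto simp: inj_on_def)
    finally show ?thesis using QS' by simp
  qed
  show ?thesis using cA cE unfolding QS A_def by simp
qed



definition T :: "nat \<Rightarrow> (nat \<Rightarrow> rat) \<Rightarrow> nat \<Rightarrow> rat" where
  "T k v i = (if i < 2*k then (if i = 0 then 0 else v (i-1)) + v (Suc i) else 0)"

definition e0 :: "nat \<Rightarrow> rat" where "e0 i = (if i = 0 then 1 else 0)"

definition Bs :: "nat \<Rightarrow> nat \<Rightarrow> nat \<Rightarrow> rat" where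
  "Bs k n t = (\<Sum>c\<in>{int k - int t..int k}. Qf k n c)"

definition X :: "nat \<Rightarrow> nat \<Rightarrow> nat \<Rightarrow> rat" where
  "X k n i = (if even i \<and> i < 2*k then (-1)^(i div 2) * Qf k n (int k - int (i div 2)) else 0)"

definition Z :: "nat \<Rightarrow> nat \<Rightarrow> nat \<Rightarrow> rat" where
  "Z k n i = (if odd i \<and> i < 2*k then (-1)^(i div 2) * Bs k n (i div 2) else 0)"

lemma nat_parity_cases: fixes i :: nat obtains r where "i = 2*r" | r where "i = 2*r+1"
  by (cases "even i") (auto elim!: evenE oddE)

lemma Bs_step: "Bs k n (Suc r) = Qf k n (int k - int (Suc r)) + Bs k n r"
proof -
  have "{int k - int (Suc r)..int k} = insert (int k - int (Suc r)) {int k - int r..int k}" by auto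
  then show ?thesis unfolding Bs_def by simp
qed

lemma TZ: "T k (Z k n) = X k n"
proof
  fix i
  show "T k (Z k n) i = X k n i"
  proof (cases "i < 2*k")
    case False then show ?thesis by (simp add: T_def X_def)
  next
    case lt: True
    show ?thesis
    proof (cases rule: nat_parity_cases[of i])
      case (1 r)
      show ?thesis
      proof (cases r)
        case 0
        have "Bs k n 0 = Qf k n (int k)" unfolding Bs_def by simp
        then show ?thesis using 1 0 lt by (simp add: T_def X_def Z_def)
      next
        case (Suc r')
        have i1: "i - 1 = 2*r'+1" using 1 Suc by simp
        have hi: "Suc i < 2*k" using 1 lt by presburger
        have "T k (Z k n) i = (-1)^r' * Bs k n r' + (-1)^(Suc r') * Bs k n (Suc r')"
          using 1 Suc lt i1 hi by (simp add: T_def Z_def)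
        also have "\<dots> = (-1)^(Suc r') * Qf k n (int k - int (Suc r'))"
          by (simp add: Bs_step algebra_simps)
        finally show ?thesis using 1 Suc lt by (simp add: X_def)
      qed
    next
      case (2 r)
      then show ?thesis using lt by (simp add: T_def X_def Z_def)
    qed
  qed
qed

lemma TX: assumes "k \<ge> 1" shows "T k (X k (Suc n)) = Z k n"
proof
  fix i
  show "T k (X k (Suc n)) i = Z k n i"
  proof (cases "i < 2*k")
    case False then show ?thesis by (simp add: T_def Z_def)
  next
    case lt: True
    show ?thesis
    proof (cases rule: nat_parity_cases[of i])
      case (1 r)
      then show ?thesis using lt by (cases r) (simp_all add: T_def X_def Z_def)
    next
      case (2 r)
      have rk: "r < k" using 2 lt by simp
      have st: "Qf k (Suc n) (int k - int r) - Qf k (Suc n) (int k - int r - 1) = Bs k n r"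
        unfolding Bs_def using rk by (subst Qf_step) auto
      have "T k (X k (Suc n)) i = (-1)^r * Qf k (Suc n) (int k - int r)
            + (if Suc r < k then (-1)^(Suc r) * Qf k (Suc n) (int k - int (Suc r)) else 0)"
        using 2 lt by (simp add: T_def X_def)
      also have "\<dots> = (-1)^r * (Qf k (Suc n) (int k - int r) - Qf k (Suc n) (int k - int r - 1))"
      proof (cases "Suc r < k")
        case True then show ?thesis by (simp add: algebra_simps)
      next
        case False
        then have "int k - int r - 1 = 0" using rk by simp
        then show ?thesis using False by (simp add: Qf_Suc_0)
      qed
      also have "\<dots> = Z k n i" using st 2 lt by (simp add: Z_def)
      finally show ?thesis .
    qed
  qed
qed

lemma X0: assumes "k \<ge> 1" shows "X k 0 = e0"
proof
  fix i
  show "X k 0 i = e0 i"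
  proof (cases "even i \<and> i < 2*k")
    case True
    then show ?thesis using assms by (auto simp: X_def e0_def Qf_def)
  next
    case False then show ?thesis using assms by (auto simp: X_def e0_def)
  qed
qed

definition W :: "nat \<Rightarrow> int \<Rightarrow> nat \<Rightarrow> rat" where
  "W k N = (if even (nat (-N)) then X k (nat (-N) div 2) else Z k (nat (-N) div 2))"

definition V :: "nat \<Rightarrow> int \<Rightarrow> nat \<Rightarrow> rat" where
  "V k N = (if N \<ge> 0 then (T k ^^ nat N) e0 else W k N)"

lemma V_step: assumes k: "k \<ge> 1" shows "V k (N+1) = T k (V k N)"
proof (cases "N \<ge> 0")
  case True
  then have "nat (N+1) = Suc (nat N)" by simp
  then show ?thesis using True by (simp add: V_def)
next
  case False
  define d where "d = nat (-N)"
  have d1: "d \<ge> 1" using False unfolding d_def by simp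
  have VN: "V k N = W k N" using False by (simp add: V_def)
  have V1: "V k (N+1) = W k (N+1)"
  proof (cases "N+1 = 0")
    case True then show ?thesis using X0[OF k] by (simp add: V_def W_def)
  next
    case False' : False
    then show ?thesis using False by (simp add: V_def)
  qed
  have dd: "nat (-(N+1)) = d - 1" unfolding d_def by simp
  show ?thesis
  proof (cases "even d")
    case True
    then obtain j where j: "d = 2*j" by blast
    then have j1: "j = Suc (j - 1)" using d1 by simp
    have "d - 1 = 2*(j-1)+1" using j d1 by simp
    then have "W k (N+1) = Z k (j-1)" unfolding W_def dd by simp
    moreover have "W k N = X k j" unfolding W_def d_def[symmetric] using j by simp
    ultimately show ?thesis using VN V1 TX[OF k, of "j-1"] j1 by simp
  next
    case odd: False
    then obtain j where j: "d = 2*j+1" using oddE by blast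
    have "W k (N+1) = X k j" unfolding W_def dd using j by simp
    moreover have "W k N = Z k j" unfolding W_def d_def[symmetric] using j by simp
    ultimately show ?thesis using VN V1 TZ by simp
  qed
qed

lemma V_top: assumes "k \<ge> 1" shows "V k N (2*k) = 0"
proof (cases "N \<ge> 0")
  case True
  then show ?thesis
  proof (cases "nat N")
    case 0 then show ?thesis using True assms by (simp add: V_def e0_def)
  next
    case (Suc M) then show ?thesis using True by (simp add: V_def T_def)
  qed
next
  case False then show ?thesis by (simp add: V_def W_def X_def Z_def)
qed

lemma pp_rec: assumes k: "k \<ge> 1"
  shows "t \<le> 2*k \<Longrightarrow> (\<Sum>l\<le>t. coeff (pp t) l * V k (N + int l) 0) = V k N t"
proof (induction t arbitrary: N rule: pp.induct)
  case 1 then show ?case by simp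
next
  case 2
  have "V k (N+1) 0 = V k N 1" using V_step[OF k, of N] k by (simp add: T_def)
  then show ?case by (simp add: add.commute)
next
  case (3 t)
  have h: "Suc t \<le> 2*k" using 3(3) by simp
  have IH1: "(\<Sum>l\<le>Suc t. coeff (pp (Suc t)) l * V k (N + 1 + int l) 0) = V k (N+1) (Suc t)"
    using 3(1)[of "N+1"] h by blast
  have IH0: "(\<Sum>l\<le>t. coeff (pp t) l * V k (N + int l) 0) = V k N t" using 3 by simp
  have s1: "(\<Sum>l\<le>Suc (Suc t). coeff (pCons 0 (pp (Suc t))) l * V k (N + int l) 0)
      = (\<Sum>l\<le>Suc t. coeff (pp (Suc t)) l * V k (N + 1 + int l) 0)"
    by (subst sum.atMost_Suc_shift) (simp add: add_ac)
  have s2: "(\<Sum>l\<le>Suc (Suc t). coeff (pp t) l * V k (N + int l) 0)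
      = (\<Sum>l\<le>t. coeff (pp t) l * V k (N + int l) 0)"
    by (simp add: pp_coeff_high)
  have "(\<Sum>l\<le>Suc (Suc t). coeff (pp (Suc (Suc t))) l * V k (N + int l) 0)
      = (\<Sum>l\<le>Suc (Suc t). coeff (pCons 0 (pp (Suc t))) l * V k (N + int l) 0)
        - (\<Sum>l\<le>Suc (Suc t). coeff (pp t) l * V k (N + int l) 0)"
    by (simp add: left_diff_distrib sum_subtractf)
  also have "\<dots> = V k (N+1) (Suc t) - V k N t" using s1 s2 IH1 IH0 by simp
  also have "\<dots> = V k N (Suc (Suc t))"
    using V_step[OF k, of N] 3(3) by (simp add: T_def)
  finally show ?case .
qed

definition cc :: "nat \<Rightarrow> int \<Rightarrow> rat" where "cc k N = V k N 0"

lemma cc_rec: assumes k: "k \<ge> 1"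
  shows "satisfies_rec (reflect_poly (pp (2*k))) (cc k)" "coeff (reflect_poly (pp (2*k))) 0 \<noteq> 0"
proof -
  define m where "m = 2*k"
  have c0: "coeff (pp m) 0 \<noteq> 0" unfolding m_def pp_coeff0 by simp
  have dq: "degree (reflect_poly (pp m)) = m" using c0 by (simp add: pp_degree)
  show "coeff (reflect_poly (pp (2*k))) 0 \<noteq> 0"
    by (simp add: pp_degree pp_coeff_top)
  show "satisfies_rec (reflect_poly (pp (2*k))) (cc k)"
    unfolding satisfies_rec_def m_def[symmetric]
  proof
    fix N
    have "(\<Sum>j\<le>degree (reflect_poly (pp m)). coeff (reflect_poly (pp m)) j * cc k (N - int j))
        = (\<Sum>j\<in>{0..m}. coeff (pp m) (m - j) * cc k (N - int j))"
      unfolding dq by (intro sum.cong) (auto simp: coeff_reflect_poly pp_degree)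
    also have "\<dots> = (\<Sum>j\<in>{0..m}. coeff (pp m) (m - (m + 0 - j)) * cc k (N - int (m + 0 - j)))"
      by (rule sum.atLeastAtMost_rev)
    also have "\<dots> = (\<Sum>l\<le>m. coeff (pp m) l * V k ((N - int m) + int l) 0)"
      by (intro sum.cong) (auto simp: cc_def of_nat_diff algebra_simps)
    also have "\<dots> = V k (N - int m) m" using pp_rec[OF k] unfolding m_def by simp
    also have "\<dots> = 0" using V_top[OF k] unfolding m_def by simp
    finally show "(\<Sum>j\<le>degree (reflect_poly (pp m)). coeff (reflect_poly (pp m)) j * cc k (N - int j)) = 0" .
  qed
qed



definition pth :: "nat \<Rightarrow> nat \<Rightarrow> int \<Rightarrow> int list set" where
  "pth K N i = {s. length s = N \<and> set s \<subseteq> {-1, 1} \<and> i + sum_list s = 0 \<and>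
      (\<forall>j\<le>N. 0 \<le> i + sum_list (take j s) \<and> i + sum_list (take j s) \<le> int K)}"

lemma all_le_Suc_split: "(\<forall>j\<le>Suc N. P j) = (P 0 \<and> (\<forall>j\<le>N. P (Suc j)))"
  by (metis Suc_le_mono le0 not0_implies_Suc)

lemma pth_finite: "finite (pth K N i)"
proof (rule finite_subset)
  show "pth K N i \<subseteq> {xs. set xs \<subseteq> {-1,1} \<and> length xs = N}" unfolding pth_def by auto
  show "finite {xs. set xs \<subseteq> {-1,1::int} \<and> length xs = N}"
    by (rule finite_lists_length_eq) simp
qed

lemma pth_out: "i < 0 \<or> i > int K \<Longrightarrow> pth K N i = {}"
  unfolding pth_def by force

lemma pth_0: "pth K 0 i = (if i = 0 then {[]} else {})"
  unfolding pth_def by auto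

lemma pth_Suc_mem:
  "s \<in> pth K (Suc N) i \<longleftrightarrow> 0 \<le> i \<and> i \<le> int K \<and>
     (\<exists>x s'. s = x#s' \<and> x \<in> {-1,1} \<and> s' \<in> pth K N (i+x))"
proof
  assume s: "s \<in> pth K (Suc N) i"
  then obtain x s' where xs: "s = x#s'" unfolding pth_def by (cases s) auto
  show "0 \<le> i \<and> i \<le> int K \<and> (\<exists>x s'. s = x#s' \<and> x \<in> {-1,1} \<and> s' \<in> pth K N (i+x))"
    using s unfolding xs pth_def all_le_Suc_split by (auto simp: add.assoc)
next
  assume "0 \<le> i \<and> i \<le> int K \<and> (\<exists>x s'. s = x#s' \<and> x \<in> {-1,1} \<and> s' \<in> pth K N (i+x))"
  then show "s \<in> pth K (Suc N) i"
    unfolding pth_def all_le_Suc_split by (auto simp: add.assoc)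
qed

lemma pth_Suc: assumes "0 \<le> i" "i \<le> int K"
  shows "pth K (Suc N) i = Cons (-1) ` pth K N (i-1) \<union> Cons 1 ` pth K N (i+1)"
proof (rule set_eqI)
  fix s
  have e: "i + -1 = i - 1" by simp
  show "s \<in> pth K (Suc N) i \<longleftrightarrow> s \<in> Cons (-1) ` pth K N (i-1) \<union> Cons 1 ` pth K N (i+1)"
  proof
    assume "s \<in> pth K (Suc N) i"
    then obtain x s' where xs: "s = x#s'" "x \<in> {-1,1}" "s' \<in> pth K N (i+x)"
      unfolding pth_Suc_mem by blast
    show "s \<in> Cons (-1) ` pth K N (i-1) \<union> Cons 1 ` pth K N (i+1)"
    proof (cases "x = 1")
      case True then show ?thesis using xs by blast
    next
      case False then have "x = -1" using xs by simp
      then show ?thesis using xs e by auto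
    qed
  next
    assume a: "s \<in> Cons (-1) ` pth K N (i-1) \<union> Cons 1 ` pth K N (i+1)"
    show "s \<in> pth K (Suc N) i"
    proof (cases "s \<in> Cons 1 ` pth K N (i+1)")
      case True
      then obtain s' where "s = 1#s'" "s' \<in> pth K N (i+1)" by blast
      then show ?thesis unfolding pth_Suc_mem using assms by blast
    next
      case False
      then obtain s' where "s = (-1)#s'" "s' \<in> pth K N (i-1)" using a by blast
      then show ?thesis unfolding pth_Suc_mem using assms e by (metis insertI1)
    qed
  qed
qed

lemma card_pth_Suc: assumes "0 \<le> i" "i \<le> int K"
  shows "card (pth K (Suc N) i) = card (pth K N (i-1)) + card (pth K N (i+1))"
proof -
  have "card (pth K (Suc N) i) = card (Cons (-1) ` pth K N (i-1)) + card (Cons 1 ` pth K N (i+1))"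
    unfolding pth_Suc[OF assms] by (rule card_Un_disjoint) (auto simp: pth_finite)
  then show ?thesis by (simp add: card_image)
qed

lemma T_count: assumes k: "k \<ge> 1"
  shows "(T k ^^ N) e0 i = of_nat (card (pth (2*k-1) N (int i)))"
proof (induction N arbitrary: i)
  case 0 then show ?case by (simp add: e0_def pth_0)
next
  case (Suc N)
  show ?case
  proof (cases "i < 2*k")
    case False
    then have "pth (2*k-1) (Suc N) (int i) = {}" using k by (intro pth_out) auto
    then show ?thesis using False by (simp add: T_def)
  next
    case True
    have c: "card (pth (2*k-1) (Suc N) (int i)) = card (pth (2*k-1) N (int i - 1)) + card (pth (2*k-1) N (int i + 1))"
      using True k by (intro card_pth_Suc) auto
    have l: "(if i = 0 then 0 else (T k ^^ N) e0 (i-1)) = of_nat (card (pth (2*k-1) N (int i - 1)))"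
    proof (cases "i = 0")
      case True then show ?thesis by (simp add: pth_out)
    next
      case False then show ?thesis using Suc.IH[of "i-1"] by (simp add: of_nat_diff)
    qed
    have r: "(T k ^^ N) e0 (Suc i) = of_nat (card (pth (2*k-1) N (int i + 1)))"
      using Suc.IH[of "Suc i"] by (simp add: add.commute)
    have "(T k ^^ Suc N) e0 i = (if i = 0 then 0 else (T k ^^ N) e0 (i-1)) + (T k ^^ N) e0 (Suc i)"
      using True by (simp only: funpow.simps comp_def) (simp add: T_def[of k "(T k ^^ N) e0"])
    then show ?thesis using l r c by simp
  qed
qed

lemma cc_nonneg: assumes k: "k \<ge> 1"
  shows "cc k (int N) = of_nat (C_nonneg (2*k-1) N)"
proof -
  have "bounded_dyck_paths (2*k-1) N = pth (2*k-1) N 0"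
    unfolding bounded_dyck_paths_def pth_def by simp
  then show ?thesis using T_count[OF k, of N 0] unfolding cc_def V_def C_nonneg_def by simp
qed

lemma C_ext_eq: assumes k: "k \<ge> 1" shows "C_ext (2*k-1) = cc k"
  unfolding C_ext_def
proof (rule the_equality)
  show "(\<forall>N. cc k (int N) = of_nat (C_nonneg (2*k-1) N)) \<and> (\<exists>q. coeff q 0 \<noteq> 0 \<and> satisfies_rec q (cc k))"
    using cc_nonneg[OF k] cc_rec[OF k] by blast
next
  fix c
  assume "(\<forall>N. c (int N) = of_nat (C_nonneg (2*k-1) N)) \<and> (\<exists>q. coeff q 0 \<noteq> 0 \<and> satisfies_rec q c)"
  then obtain q where q: "coeff q 0 \<noteq> 0" "satisfies_rec q c" and e: "\<And>N. c (int N) = of_nat (C_nonneg (2*k-1) N)"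
    by blast
  show "c = cc k"
    by (rule rec_unique[OF cc_rec(2)[OF k] cc_rec(1)[OF k] q]) (simp add: e cc_nonneg[OF k])
qed

theorem corollary13:
  fixes n k :: nat
  assumes "n \<ge> 1" and "k \<ge> 1"
  shows "C_ext (2*k - 1) (- 2 * int n) = of_nat (card (alt_seqs (2*n - 1) k))"
proof -
  have d: "nat (- (- 2 * int n)) = 2*n" by simp
  have "C_ext (2*k - 1) (- 2 * int n) = X k n 0"
    unfolding C_ext_eq[OF assms(2)] cc_def V_def W_def d using assms by simp
  also have "\<dots> = Qf k n (int k)" using assms by (simp add: X_def)
  also have "\<dots> = of_nat (card {a \<in> alt_seqs (2*n-1) k. a!0 \<le> int k})" using assms by (simp add: Qf_def)
  also have "{a \<in> alt_seqs (2*n-1) k. a!0 \<le> int k} = alt_seqs (2*n-1) k"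
  proof -
    obtain n' where "2*n-1 = Suc n'" using assms by (intro that[of "2*n-2"]) simp
    then show ?thesis using alt_hd_range[of _ n' k] by auto
  qed
  finally show ?thesis .
qed

end
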